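(* Let $n\geq 3$ and let $\mathcal{T}'\subseteq\mathcal{T}_n$ be such that for every $T\in\mathcal{T}_n$ there exists $T'\in\mathcal{T}'$ with $T\rhd T'$. Then $\chi(\mathrm{KG}(\mathcal{T}'))=n-2$.
   Context: Label the vertices of a convex $n$-gon by $1,\dots,n$ in cyclic order; $\mathrm{Diag}_n = \{\{i,j\} \subseteq [n]: i-j\not\equiv \pm1 \pmod n\}$; two diagonals cross if they meet in the interior of the polygon (their four endpoints are distinct and interleave cyclically). A triangulation is identified with its set of diagonals, and $\mathcal{T}_n$ is the set of triangulations. For a set system $\mathcal{F}$, $\mathrm{KG}(\mathcal{F})$ is the graph on $\mathcal{F}$ with $F,F'$ adjacent iff $F\cap F'=\emptyset$. Swapping relation: for $\{i,j\},\{i',j'\}\in\mathrm{Diag}_n$ written with $i<j$ and $i'<j'$, write $\{i,j\}\rhd\{i',j'\}$ if either $\{i,j\}$ and $\{i',j'\}$ do not cross (in particular $d\rhd d$ for every $d$), or $i'<i<j'<j<n$ and $j'-i>1$. For $T,T'\in\mathcal{T}_n$, write $T\rhd T'$ if $d\rhd d'$ for all $d\in T$ and $d'\in T'$. *)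

theory Defs
  imports Main
begin

text \<open>Vertices of the convex n-gon are 1..n in cyclic order; diagonals are 2-subsets.\<close>

definition Diag :: "nat \<Rightarrow> nat set set" where
  "Diag n = {{i, j} | i j. i \<in> {1..n} \<and> j \<in> {1..n} \<and> i \<noteq> j \<and>
      (int i - int j) mod int n \<noteq> 1 mod int n \<and>
      (int i - int j) mod int n \<noteq> (-1) mod int n}"

definition crosses :: "nat set \<Rightarrow> nat set \<Rightarrow> bool" where
  "crosses d d' \<longleftrightarrow> (\<exists>i j i' j'. d = {i, j} \<and> i < j \<and> d' = {i', j'} \<and> i' < j' \<and>
      ((i < i' \<and> i' < j \<and> j < j') \<or> (i' < i \<and> i < j' \<and> j' < j)))"

definition triangulations :: "nat \<Rightarrow> nat set set set" where
  "triangulations n = {T. T \<subseteq> Diag n \<and> (\<forall>d\<in>T. \<forall>d'\<in>T. \<not> crosses d d') \<and>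
      (\<forall>d\<in>Diag n. (\<forall>d'\<in>T. \<not> crosses d d') \<longrightarrow> d \<in> T)}"

definition swap_diag :: "nat \<Rightarrow> nat set \<Rightarrow> nat set \<Rightarrow> bool" where
  "swap_diag n d d' \<longleftrightarrow> \<not> crosses d d' \<or>
     (\<exists>i j i' j'. d = {i, j} \<and> i < j \<and> d' = {i', j'} \<and> i' < j' \<and>
        i' < i \<and> i < j' \<and> j' < j \<and> j < n \<and> j' - i > 1)"

definition swap_triang :: "nat \<Rightarrow> nat set set \<Rightarrow> nat set set \<Rightarrow> bool" where
  "swap_triang n T T' \<longleftrightarrow> (\<forall>d\<in>T. \<forall>d'\<in>T'. swap_diag n d d')"

definition KG_adj :: "'a set set \<Rightarrow> 'a set \<Rightarrow> 'a set \<Rightarrow> bool" where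
  "KG_adj \<F> F F' \<longleftrightarrow> F \<in> \<F> \<and> F' \<in> \<F> \<and> F \<noteq> F' \<and> F \<inter> F' = {}"

definition proper_coloring :: "'a set set \<Rightarrow> ('a set \<Rightarrow> nat) \<Rightarrow> nat \<Rightarrow> bool" where
  "proper_coloring \<F> c k \<longleftrightarrow> (\<forall>F\<in>\<F>. c F < k) \<and>
     (\<forall>F F'. KG_adj \<F> F F' \<longrightarrow> c F \<noteq> c F')"

definition chromatic_number_KG :: "'a set set \<Rightarrow> nat" where
  "chromatic_number_KG \<F> = (LEAST k. \<exists>c. proper_coloring \<F> c k)"

end

theory Submission
  imports Defs
begin

lemma doubleton_eq_ord:
  fixes a b c d :: nat
  assumes "{a,b} = {c,d}" "a < b" "c < d" shows "a = c \<and> b = d"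
  using assms by (metis doubleton_eq_iff less_asym)

lemma crosses_iff:
  fixes i j i' j' :: nat
  assumes "i < j" "i' < j'"
  shows "crosses {i,j} {i',j'} \<longleftrightarrow> (i < i' \<and> i' < j \<and> j < j') \<or> (i' < i \<and> i < j' \<and> j' < j)"
proof
  assume "crosses {i,j} {i',j'}"
  then obtain a b a' b' where h: "{i,j} = {a,b}" "a<b" "{i',j'} = {a',b'}" "a'<b'"
    "(a < a' \<and> a' < b \<and> b < b') \<or> (a' < a \<and> a < b' \<and> b' < b)"
    unfolding crosses_def by blast
  from doubleton_eq_ord[OF h(1) assms(1) h(2)] doubleton_eq_ord[OF h(3) assms(2) h(4)] h(5)
  show "(i < i' \<and> i' < j \<and> j < j') \<or> (i' < i \<and> i < j' \<and> j' < j)" by auto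
next
  assume "(i < i' \<and> i' < j \<and> j < j') \<or> (i' < i \<and> i < j' \<and> j' < j)"
  then show "crosses {i,j} {i',j'}" unfolding crosses_def using assms by blast
qed

lemma swap_iff:
  fixes i j i' j' :: nat
  assumes "i < j" "i' < j'"
  shows "swap_diag n {i,j} {i',j'} \<longleftrightarrow> \<not> crosses {i,j} {i',j'} \<or>
     (i' < i \<and> i < j' \<and> j' < j \<and> j < n \<and> j' - i > 1)"
proof
  assume "swap_diag n {i,j} {i',j'}"
  then consider "\<not> crosses {i,j} {i',j'}" | a b a' b' where "{i,j} = {a,b}" "a<b" "{i',j'} = {a',b'}" "a'<b'"
    "a' < a" "a < b'" "b' < b" "b < n" "b' - a > 1"
    unfolding swap_diag_def by blast
  then show "\<not> crosses {i,j} {i',j'} \<or>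
     (i' < i \<and> i < j' \<and> j' < j \<and> j < n \<and> j' - i > 1)"
  proof cases
    case 1 then show ?thesis by blast
  next
    case 2
    from doubleton_eq_ord[OF 2(1) assms(1) 2(2)] doubleton_eq_ord[OF 2(3) assms(2) 2(4)] 2
    show ?thesis by auto
  qed
next
  assume "\<not> crosses {i,j} {i',j'} \<or>
     (i' < i \<and> i < j' \<and> j' < j \<and> j < n \<and> j' - i > 1)"
  then show "swap_diag n {i,j} {i',j'}" unfolding swap_diag_def using assms by blast
qed

lemma crosses_sym: "crosses d d' \<Longrightarrow> crosses d' d"
  unfolding crosses_def by blast

lemma not_crosses_self: "\<not> crosses d d"
  unfolding crosses_def by (metis doubleton_eq_ord less_asym)

definition isdiag :: "nat \<Rightarrow> nat \<Rightarrow> nat \<Rightarrow> bool" where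
  "isdiag n i j \<longleftrightarrow> 1 \<le> i \<and> i + 2 \<le> j \<and> j \<le> n \<and> \<not> (i = 1 \<and> j = n)"

lemma mod_lem1:
  assumes "1 \<le> i" "i < j" "j \<le> n"
  shows "(int i - int j) mod int n = int n + int i - int j"
proof -
  have "(int i - int j) mod int n = (int i - int j + int n) mod int n" by simp
  also have "\<dots> = int i - int j + int n" using assms by (intro mod_pos_pos_trivial) auto
  also have "\<dots> = int n + int i - int j" by simp
  finally show ?thesis .
qed

lemma mod_lem2:
  assumes "1 \<le> i" "i < j" "j \<le> n"
  shows "(int j - int i) mod int n = int j - int i"
  using assms by (intro mod_pos_pos_trivial) auto

lemma Diag_iff:
  assumes "n \<ge> 3"
  shows "d \<in> Diag n \<longleftrightarrow> (\<exists>i j. d = {i,j} \<and> isdiag n i j)"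
proof -
  have m1: "1 mod int n = 1" using assms by simp
  have m2: "(-1) mod int n = int n - 1" using assms by (simp add: zmod_minus1)
  show ?thesis
  proof
    assume "d \<in> Diag n"
    then obtain i j where h: "d = {i,j}" "i \<in> {1..n}" "j \<in> {1..n}" "i \<noteq> j"
      "(int i - int j) mod int n \<noteq> 1 mod int n" "(int i - int j) mod int n \<noteq> (-1) mod int n"
      unfolding Diag_def by blast
    show "\<exists>i j. d = {i,j} \<and> isdiag n i j"
    proof (cases "i < j")
      case True
      then have "isdiag n i j" using h mod_lem1[of i j n] m1 m2 unfolding isdiag_def by auto
      then show ?thesis using h by blast
    next
      case False
      then have "j < i" using h by auto
      then have "isdiag n j i" using h mod_lem2[of j i n] m1 m2 unfolding isdiag_def by auto
      then show ?thesis using h by (metis insert_commute)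
    qed
  next
    assume "\<exists>i j. d = {i,j} \<and> isdiag n i j"
    then obtain i j where h: "d = {i,j}" "isdiag n i j" by blast
    then have "i < j" "1 \<le> i" "j \<le> n" unfolding isdiag_def by auto
    have e: "(int i - int j) mod int n = int n + int i - int j" using mod_lem1 \<open>i<j\<close> \<open>1\<le>i\<close> \<open>j\<le>n\<close> by blast
    have c1: "(int i - int j) mod int n \<noteq> 1 mod int n" using e m1 h(2) unfolding isdiag_def by auto
    have c2: "(int i - int j) mod int n \<noteq> (-1) mod int n" using e m2 h(2) unfolding isdiag_def by auto
    have "i \<in> {1..n}" "j \<in> {1..n}" "i \<noteq> j" using \<open>i<j\<close> \<open>1\<le>i\<close> \<open>j\<le>n\<close> by auto
    then show "d \<in> Diag n" using h(1) c1 c2 unfolding Diag_def by blast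
  qed
qed


definition nc :: "nat set set \<Rightarrow> bool" where
  "nc T \<longleftrightarrow> (\<forall>d\<in>T. \<forall>d'\<in>T. \<not> crosses d d')"

definition dm :: "nat \<Rightarrow> nat set set \<Rightarrow> nat set \<Rightarrow> bool" where
  "dm n X e \<longleftrightarrow> (\<forall>d\<in>X. swap_diag n d e)"

definition blk :: "nat \<Rightarrow> nat set set \<Rightarrow> nat set set \<Rightarrow> bool" where
  "blk n X Y \<longleftrightarrow> X \<noteq> Y \<and> \<not> (\<exists>e\<in>Diag n. dm n X e \<and> dm n Y e)"

lemma finite_Diag: "finite (Diag n)"
proof -
  have "Diag n \<subseteq> (\<lambda>(i,j). {i,j}) ` ({1..n} \<times> {1..n})" unfolding Diag_def by auto
  then show ?thesis by (rule finite_subset) auto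
qed

lemma tri_sub: "T \<in> triangulations n \<Longrightarrow> T \<subseteq> Diag n"
  unfolding triangulations_def by auto

lemma tri_nc: "T \<in> triangulations n \<Longrightarrow> nc T"
  unfolding triangulations_def nc_def by auto

lemma tri_max: "T \<in> triangulations n \<Longrightarrow> d \<in> Diag n \<Longrightarrow> (\<And>d'. d' \<in> T \<Longrightarrow> \<not> crosses d d') \<Longrightarrow> d \<in> T"
  unfolding triangulations_def by auto

lemma complete:
  assumes "X \<subseteq> Diag n" "nc X"
  shows "\<exists>T\<in>triangulations n. X \<subseteq> T"
proof -
  define P where "P Y \<longleftrightarrow> X \<subseteq> Y \<and> Y \<subseteq> Diag n \<and> nc Y" for Y
  have "P X" using assms unfolding P_def by auto
  moreover have "\<forall>y. P y \<longrightarrow> card y < card (Diag n) + 1"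
    using finite_Diag unfolding P_def by (auto intro: card_mono less_Suc_eq_le[THEN iffD2])
  ultimately obtain T where T: "P T" "\<And>y. P y \<Longrightarrow> card y \<le> card T"
    using ex_has_greatest_nat[of P X card] by blast
  have fT: "finite T" using T(1) finite_Diag unfolding P_def by (auto intro: finite_subset)
  have "T \<in> triangulations n"
    unfolding triangulations_def
  proof (intro CollectI conjI ballI impI)
    show "T \<subseteq> Diag n" using T(1) unfolding P_def by auto
    show "\<And>d d'. d \<in> T \<Longrightarrow> d' \<in> T \<Longrightarrow> \<not> crosses d d'" using T(1) unfolding P_def nc_def by auto
    fix d assume d: "d \<in> Diag n" "\<forall>d'\<in>T. \<not> crosses d d'"
    show "d \<in> T"
    proof (rule ccontr)
      assume "d \<notin> T"
      have "P (insert d T)" using T(1) d unfolding P_def nc_def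
        by (auto dest: crosses_sym simp: not_crosses_self)
      then have "card (insert d T) \<le> card T" using T(2) by blast
      then show False using fT \<open>d \<notin> T\<close> by simp
    qed
  qed
  then show ?thesis using T(1) unfolding P_def by auto
qed

lemma Diag3: "Diag 3 = {}"
  using Diag_iff[of 3] unfolding isdiag_def by auto

lemma tri3: "S \<in> triangulations 3 \<Longrightarrow> S = {}"
  using tri_sub Diag3 by blast

lemma dm_mono: "X \<subseteq> X' \<Longrightarrow> dm n X' e \<Longrightarrow> dm n X e"
  unfolding dm_def by auto

lemma dm_self: "nc X \<Longrightarrow> x \<in> X \<Longrightarrow> dm n X x"
  unfolding dm_def nc_def swap_diag_def by auto

lemma blk_intro:
  assumes "nc X" "x \<in> X" "x \<in> Diag n" "\<not> (\<exists>e\<in>Diag n. dm n X e \<and> dm n Y e)"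
  shows "blk n X Y"
  using assms dm_self unfolding blk_def by blast

lemma blk_sym: "blk n X Y \<Longrightarrow> blk n Y X"
  unfolding blk_def by blast

lemma diag_mem: "n \<ge> 3 \<Longrightarrow> isdiag n i j \<Longrightarrow> {i,j} \<in> Diag n"
  using Diag_iff by blast

lemma diag_form:
  assumes "n \<ge> 3" "d \<in> Diag n"
  obtains i j where "d = {i,j}" "isdiag n i j"
  using assms Diag_iff by blast


definition sh :: "nat set set \<Rightarrow> nat set set" where
  "sh S = (\<lambda>d. Suc ` d) ` S"

lemma sh_form:
  assumes "m \<ge> 3" "S \<subseteq> Diag m" "d' \<in> sh S"
  obtains i j where "d' = {Suc i, Suc j}" "isdiag m i j" "{i,j} \<in> S"
proof -
  obtain d where d: "d \<in> S" "d' = Suc ` d" using assms(3) unfolding sh_def by auto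
  then obtain i j where "d = {i,j}" "isdiag m i j" using assms diag_form by blast
  then show ?thesis using that d by auto
qed

lemma sh_mem: "{i,j} \<in> S \<Longrightarrow> {Suc i, Suc j} \<in> sh S"
  unfolding sh_def by (metis image_empty image_eqI image_insert)

lemma sh_sub:
  assumes "m \<ge> 3" "S \<subseteq> Diag m" shows "sh S \<subseteq> Diag (Suc m)"
proof
  fix d' assume "d' \<in> sh S"
  then obtain i j where "d' = {Suc i, Suc j}" "isdiag m i j" using assms sh_form by blast
  then show "d' \<in> Diag (Suc m)" using assms Diag_iff[of "Suc m"] unfolding isdiag_def by auto
qed

lemma sh_nc:
  assumes "m \<ge> 3" "S \<subseteq> Diag m" "nc S" shows "nc (sh S)"
  unfolding nc_def
proof (intro ballI)
  fix d d' assume "d \<in> sh S" "d' \<in> sh S"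
  then obtain i j i' j' where a: "d = {Suc i, Suc j}" "isdiag m i j" "{i,j} \<in> S"
     and b: "d' = {Suc i', Suc j'}" "isdiag m i' j'" "{i',j'} \<in> S"
    using assms sh_form by metis
  have "\<not> crosses {i,j} {i',j'}" using assms(3) a b unfolding nc_def by auto
  then show "\<not> crosses d d'" using a b crosses_iff unfolding isdiag_def by auto
qed

lemma trans_dm:
  assumes "m \<ge> 3" "S \<subseteq> Diag m" "2 \<le> p" "p < q" "dm (Suc m) (sh S) {p,q}"
  shows "dm m S {p-1,q-1}"
  unfolding dm_def
proof
  fix d assume "d \<in> S"
  then obtain i j where d: "d = {i,j}" "isdiag m i j" using assms diag_form by blast
  obtain p0 q0 where pq: "p = Suc p0" "q = Suc q0" using assms(3,4) by (cases p; cases q) auto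
  have ij: "i < j" "1 \<le> i" "j \<le> m" using d(2) unfolding isdiag_def by auto
  have pq0: "p0 < q0" using pq assms(4) by simp
  have s1: "Suc i < Suc j" "Suc p0 < Suc q0" using ij pq0 by auto
  have "swap_diag (Suc m) {Suc i, Suc j} {Suc p0, Suc q0}" using assms(5) sh_mem \<open>d\<in>S\<close> d pq unfolding dm_def by blast
  then have "\<not> ((Suc i < Suc p0 \<and> Suc p0 < Suc j \<and> Suc j < Suc q0) \<or> (Suc p0 < Suc i \<and> Suc i < Suc q0 \<and> Suc q0 < Suc j)) \<or>
     (Suc p0 < Suc i \<and> Suc i < Suc q0 \<and> Suc q0 < Suc j \<and> Suc j < Suc m \<and> Suc q0 - Suc i > 1)"
    unfolding swap_iff[OF s1] crosses_iff[OF s1] .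
  then have "\<not> ((i < p0 \<and> p0 < j \<and> j < q0) \<or> (p0 < i \<and> i < q0 \<and> q0 < j)) \<or>
     (p0 < i \<and> i < q0 \<and> q0 < j \<and> j < m \<and> q0 - i > 1)" by simp
  then have "swap_diag m {i,j} {p0,q0}" unfolding swap_iff[OF ij(1) pq0] crosses_iff[OF ij(1) pq0] .
  then show "swap_diag m d {p-1,q-1}" using d pq by simp
qed

lemma trans_dm1:
  assumes "m \<ge> 3" "S \<subseteq> Diag m" "4 \<le> q" "dm (Suc m) (sh S) {1,q}"
  shows "dm m S {1,q-1}"
  unfolding dm_def
proof
  fix d assume "d \<in> S"
  then obtain i j where d: "d = {i,j}" "isdiag m i j" using assms diag_form by blast
  obtain q0 where pq: "q = Suc q0" using assms(3) by (cases q) auto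
  have ij: "i < j" "1 \<le> i" "j \<le> m" using d(2) unfolding isdiag_def by auto
  have pq0: "1 < q0" using pq assms(3) by simp
  have s1: "Suc i < Suc j" "1 < Suc q0" using ij pq0 by auto
  have "swap_diag (Suc m) {Suc i, Suc j} {1, Suc q0}" using assms(4) sh_mem \<open>d\<in>S\<close> d pq unfolding dm_def by blast
  then have "\<not> ((Suc i < 1 \<and> 1 < Suc j \<and> Suc j < Suc q0) \<or> (1 < Suc i \<and> Suc i < Suc q0 \<and> Suc q0 < Suc j)) \<or>
     (1 < Suc i \<and> Suc i < Suc q0 \<and> Suc q0 < Suc j \<and> Suc j < Suc m \<and> Suc q0 - Suc i > 1)"
    unfolding swap_iff[OF s1] crosses_iff[OF s1] .
  then have "\<not> ((i < 1 \<and> 1 < j \<and> j < q0) \<or> (1 < i \<and> i < q0 \<and> q0 < j)) \<or>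
     (1 < i \<and> i < q0 \<and> q0 < j \<and> j < m \<and> q0 - i > 1)" using ij by auto
  then have "swap_diag m {i,j} {1,q0}" unfolding swap_iff[OF ij(1) pq0] crosses_iff[OF ij(1) pq0] .
  then show "swap_diag m d {1,q-1}" using d pq by simp
qed

lemma ear:
  assumes "m \<ge> 4" "S \<in> triangulations m" "dm (Suc m) (sh S) {1,3}"
  shows "{2,m} \<in> S"
proof (rule tri_max[OF assms(2)])
  have m3: "m \<ge> 3" using assms(1) by simp
  have "isdiag m 2 m" using assms(1) unfolding isdiag_def by auto
  then show "{2,m} \<in> Diag m" using m3 diag_mem by auto
  fix d' assume "d' \<in> S"
  then obtain i j where d: "d' = {i,j}" "isdiag m i j" using m3 tri_sub[OF assms(2)] diag_form by blast
  have ij: "i < j" "1 \<le> i" "j \<le> m" using d(2) unfolding isdiag_def by auto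
  have s1: "Suc i < Suc j" "(1::nat) < 3" using ij by auto
  have "swap_diag (Suc m) {Suc i, Suc j} {1,3}" using assms(3) sh_mem \<open>d'\<in>S\<close> d unfolding dm_def by blast
  then have A: "\<not> ((Suc i < 1 \<and> 1 < Suc j \<and> Suc j < 3) \<or> (1 < Suc i \<and> Suc i < 3 \<and> 3 < Suc j)) \<or>
     (1 < Suc i \<and> Suc i < 3 \<and> 3 < Suc j \<and> Suc j < Suc m \<and> 3 - Suc i > 1)"
    unfolding swap_iff[OF s1] crosses_iff[OF s1] .
  have s2: "2 < m" using assms(1) by simp
  show "\<not> crosses {2,m} d'" unfolding d(1) crosses_iff[OF s2 ij(1)] using A ij by auto
qed


definition apex :: "nat \<Rightarrow> nat set set \<Rightarrow> nat" where
  "apex m S = (LEAST x. 3 \<le> x \<and> ({x, Suc m} \<in> sh S \<or> x = m))"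

definition vset :: "nat \<Rightarrow> nat set set \<Rightarrow> nat set set" where
  "vset m S = insert {1, apex m S} (sh S)"

definition sset :: "nat \<Rightarrow> nat set set \<Rightarrow> nat set set" where
  "sset m S = insert {2, Suc m} (sh S)"

definition F1 :: "nat \<Rightarrow> nat set set" where
  "F1 m = {{1,x} | x. 3 \<le> x \<and> x \<le> m}"

lemma apex_bounds: "m \<ge> 3 \<Longrightarrow> 3 \<le> apex m S \<and> apex m S \<le> m"
proof -
  assume m: "m \<ge> 3"
  let ?P = "\<lambda>x. 3 \<le> x \<and> ({x, Suc m} \<in> sh S \<or> x = m)"
  have "?P m" using m by simp
  then have "?P (apex m S)" "apex m S \<le> m" unfolding apex_def by (rule LeastI, rule Least_le)
  then show ?thesis by simp
qed

lemma apex_prop: "m \<ge> 3 \<Longrightarrow> apex m S < m \<Longrightarrow> {apex m S, Suc m} \<in> sh S"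
proof -
  assume m: "m \<ge> 3" "apex m S < m"
  let ?P = "\<lambda>x. 3 \<le> x \<and> ({x, Suc m} \<in> sh S \<or> x = m)"
  have "?P m" using m by simp
  then have "?P (apex m S)" unfolding apex_def by (rule LeastI)
  then show ?thesis using m by simp
qed

lemma apex_min: "x < apex m S \<Longrightarrow> 3 \<le> x \<Longrightarrow> {x, Suc m} \<notin> sh S"
  unfolding apex_def using not_less_Least by blast

lemma nc_insert: "nc X \<Longrightarrow> (\<And>y. y \<in> X \<Longrightarrow> \<not> crosses x y) \<Longrightarrow> nc (insert x X)"
  unfolding nc_def by (auto dest: crosses_sym simp: not_crosses_self)

lemma vset_ok:
  assumes m: "m \<ge> 3" and S: "S \<in> triangulations m"
  shows "vset m S \<subseteq> Diag (Suc m)" "nc (vset m S)"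
proof -
  let ?a = "apex m S"
  have a: "3 \<le> ?a" "?a \<le> m" using apex_bounds[OF m] by auto
  have "isdiag (Suc m) 1 ?a" using a unfolding isdiag_def by auto
  then have "{1, ?a} \<in> Diag (Suc m)" using m diag_mem[of "Suc m"] by auto
  then show "vset m S \<subseteq> Diag (Suc m)" unfolding vset_def using sh_sub[OF m tri_sub[OF S]] by auto
  have ncs: "nc (sh S)" using sh_nc[OF m tri_sub[OF S] tri_nc[OF S]] .
  show "nc (vset m S)" unfolding vset_def
  proof (rule nc_insert[OF ncs])
    fix y assume y: "y \<in> sh S"
    then obtain i j where d: "y = {Suc i, Suc j}" "isdiag m i j" "{i,j} \<in> S"
      using sh_form[OF m tri_sub[OF S]] by blast
    have ij: "i < j" "1 \<le> i" "j \<le> m" "\<not>(i = 1 \<and> j = m)" using d(2) unfolding isdiag_def by auto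
    have s1: "1 < ?a" "Suc i < Suc j" using a ij by auto
    show "\<not> crosses {1, ?a} y"
    proof
      assume "crosses {1, ?a} y"
      then have c: "Suc i < ?a" "?a < Suc j" unfolding d(1) crosses_iff[OF s1] by auto
      show False
      proof (cases "j = m")
        case True
        then have "{Suc i, Suc m} \<in> sh S" using y d by simp
        moreover have "3 \<le> Suc i" using ij True by auto
        ultimately show False using apex_min c(1) by blast
      next
        case False
        then have "?a < m" using c ij by auto
        then have h: "{?a, Suc m} \<in> sh S" using apex_prop m by blast
        have s2: "Suc i < Suc j" "?a < Suc m" using ij a by auto
        have "crosses y {?a, Suc m}" unfolding d(1) crosses_iff[OF s2] using c False ij by auto
        then show False using ncs y h unfolding nc_def by blast
      qed
    qed
  qed
qed

lemma sset_ok: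
  assumes m: "m \<ge> 3" and S: "S \<in> triangulations m"
  shows "sset m S \<subseteq> Diag (Suc m)" "nc (sset m S)"
proof -
  have "isdiag (Suc m) 2 (Suc m)" using m unfolding isdiag_def by auto
  then have "{2, Suc m} \<in> Diag (Suc m)" using m diag_mem[of "Suc m"] by auto
  then show "sset m S \<subseteq> Diag (Suc m)" unfolding sset_def using sh_sub[OF m tri_sub[OF S]] by auto
  have ncs: "nc (sh S)" using sh_nc[OF m tri_sub[OF S] tri_nc[OF S]] .
  show "nc (sset m S)" unfolding sset_def
  proof (rule nc_insert[OF ncs])
    fix y assume y: "y \<in> sh S"
    then obtain i j where d: "y = {Suc i, Suc j}" "isdiag m i j" "{i,j} \<in> S"
      using sh_form[OF m tri_sub[OF S]] by blast
    have ij: "i < j" "1 \<le> i" "j \<le> m" using d(2) unfolding isdiag_def by auto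
    have s1: "2 < Suc m" "Suc i < Suc j" using m ij by auto
    show "\<not> crosses {2, Suc m} y" unfolding d(1) crosses_iff[OF s1] using ij by auto
  qed
qed

lemma F1_ok:
  assumes m: "m \<ge> 3"
  shows "F1 m \<subseteq> Diag (Suc m)" "nc (F1 m)"
proof -
  show "F1 m \<subseteq> Diag (Suc m)"
  proof
    fix d assume "d \<in> F1 m"
    then obtain x where x: "d = {1,x}" "3 \<le> x" "x \<le> m" unfolding F1_def by blast
    then have "isdiag (Suc m) 1 x" unfolding isdiag_def by auto
    then show "d \<in> Diag (Suc m)" using x m diag_mem[of "Suc m"] by auto
  qed
  show "nc (F1 m)" unfolding nc_def
  proof (intro ballI)
    fix d d' assume "d \<in> F1 m" "d' \<in> F1 m"
    then obtain x y where x: "d = {1,x}" "3 \<le> x" and y: "d' = {1,y}" "3 \<le> y" unfolding F1_def by blast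
    have s: "1 < x" "1 < y" using x y by auto
    show "\<not> crosses d d'" unfolding x(1) y(1) crosses_iff[OF s] by auto
  qed
qed


lemma vblock: assumes m: "m \<ge> 3" shows "\<not> dm (Suc m) (vset m S) {2, Suc m}"
proof
  assume h: "dm (Suc m) (vset m S) {2, Suc m}"
  let ?a = "apex m S"
  have a: "3 \<le> ?a" "?a \<le> m" using apex_bounds[OF m] by auto
  have "swap_diag (Suc m) {1, ?a} {2, Suc m}" using h unfolding dm_def vset_def by auto
  moreover have s: "1 < ?a" "2 < Suc m" using a by auto
  ultimately show False unfolding swap_iff[OF s] crosses_iff[OF s] using a by auto
qed

lemma sblock: assumes "3 \<le> q" "q \<le> m" shows "\<not> dm (Suc m) (sset m S) {1, q}"
proof
  assume h: "dm (Suc m) (sset m S) {1, q}"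
  have "swap_diag (Suc m) {2, Suc m} {1, q}" using h unfolding dm_def sset_def by auto
  moreover have s: "2 < Suc m" "1 < q" using assms by auto
  ultimately show False unfolding swap_iff[OF s] crosses_iff[OF s] using assms by auto
qed

lemma Fblock: assumes "isdiag (Suc m) p q" "2 \<le> p" shows "\<not> dm (Suc m) (F1 m) {p, q}"
proof
  assume h: "dm (Suc m) (F1 m) {p, q}"
  have pq: "p + 2 \<le> q" "q \<le> Suc m" using assms unfolding isdiag_def by auto
  have "{1, Suc p} \<in> F1 m" unfolding F1_def using pq assms(2) by auto
  then have "swap_diag (Suc m) {1, Suc p} {p, q}" using h unfolding dm_def by auto
  moreover have s: "1 < Suc p" "p < q" using pq assms by auto
  ultimately show False unfolding swap_iff[OF s] crosses_iff[OF s] using pq assms by auto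
qed

lemma blk_contra: "blk m S1 S2 \<Longrightarrow> e \<in> Diag m \<Longrightarrow> dm m S1 e \<Longrightarrow> dm m S2 e \<Longrightarrow> False"
  unfolding blk_def by blast

lemma proj2:
  assumes m: "m \<ge> 3" and S: "S \<in> triangulations m" and X: "sh S \<subseteq> X"
    and pq: "isdiag (Suc m) p q" "2 \<le> p" "\<not> (p = 2 \<and> q = Suc m)" and h: "dm (Suc m) X {p,q}"
  shows "{p-1,q-1} \<in> Diag m" "dm m S {p-1,q-1}"
proof -
  have "isdiag m (p-1) (q-1)" using pq unfolding isdiag_def by auto
  then show "{p-1,q-1} \<in> Diag m" using m diag_mem by blast
  have "p < q" using pq unfolding isdiag_def by auto
  then show "dm m S {p-1,q-1}" using trans_dm[OF m tri_sub[OF S] pq(2)] dm_mono[OF X h] by blast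
qed

lemma proj1:
  assumes m: "m \<ge> 3" and S: "S \<in> triangulations m" and X: "sh S \<subseteq> X"
    and pq: "isdiag (Suc m) 1 q" "4 \<le> q" and h: "dm (Suc m) X {1,q}"
  shows "{1,q-1} \<in> Diag m" "dm m S {1,q-1}"
proof -
  have "isdiag m 1 (q-1)" using pq unfolding isdiag_def by auto
  then show "{1,q-1} \<in> Diag m" using m diag_mem by blast
  show "dm m S {1,q-1}" using trans_dm1[OF m tri_sub[OF S] pq(2)] dm_mono[OF X h] by blast
qed

lemma K1:
  assumes m: "m \<ge> 3" and S1: "S1 \<in> triangulations m" and S2: "S2 \<in> triangulations m"
    and b: "blk m S1 S2" and e: "e \<in> Diag (Suc m)"
    and h1: "dm (Suc m) (vset m S1) e" and h2: "dm (Suc m) (vset m S2) e"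
  shows False
proof -
  obtain p q where e': "e = {p,q}" "isdiag (Suc m) p q" using e m diag_form[of "Suc m"] by auto
  have X1: "sh S1 \<subseteq> vset m S1" and X2: "sh S2 \<subseteq> vset m S2" unfolding vset_def by auto
  show False
  proof (cases "p = 1")
    case True
    then have q3: "3 \<le> q" "q \<le> m" using e' unfolding isdiag_def by auto
    show False
    proof (cases "q = 3")
      case True
      show False
      proof (cases "m = 3")
        case True
        then show False using S1 S2 b tri3 unfolding blk_def by blast
      next
        case False
        then have m4: "m \<ge> 4" using m by simp
        have "dm (Suc m) (sh S1) {1,3}" "dm (Suc m) (sh S2) {1,3}"
          using dm_mono[OF X1 h1] dm_mono[OF X2 h2] e' \<open>p=1\<close> \<open>q=3\<close> by auto
        then have in12: "{2,m} \<in> S1" "{2,m} \<in> S2" using ear[OF m4 S1] ear[OF m4 S2] by auto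
        have "{2,m} \<in> Diag m" using tri_sub[OF S1] in12 by auto
        then show False using blk_contra[OF b] dm_self[OF tri_nc[OF S1] in12(1)] dm_self[OF tri_nc[OF S2] in12(2)] by blast
      qed
    next
      case False
      then have q4: "4 \<le> q" using q3 by auto
      have d: "isdiag (Suc m) 1 q" using e' \<open>p=1\<close> by simp
      show False using proj1[OF m S1 X1 d q4] proj1[OF m S2 X2 d q4] h1 h2 e' \<open>p=1\<close> blk_contra[OF b] by auto
    qed
  next
    case False
    then have p2: "2 \<le> p" using e' unfolding isdiag_def by auto
    show False
    proof (cases "p = 2 \<and> q = Suc m")
      case True
      then show False using vblock[OF m] h1 e' by auto
    next
      case False
      show False using proj2[OF m S1 X1 e'(2) p2 False] proj2[OF m S2 X2 e'(2) p2 False] h1 h2 e'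
          blk_contra[OF b] by auto
    qed
  qed
qed

lemma K2:
  assumes m: "m \<ge> 3" and S1: "S1 \<in> triangulations m" and S2: "S2 \<in> triangulations m"
    and b: "blk m S1 S2" and e: "e \<in> Diag (Suc m)"
    and h1: "dm (Suc m) (vset m S1) e" and h2: "dm (Suc m) (sset m S2) e"
  shows False
proof -
  obtain p q where e': "e = {p,q}" "isdiag (Suc m) p q" using e m diag_form[of "Suc m"] by auto
  have X1: "sh S1 \<subseteq> vset m S1" and X2: "sh S2 \<subseteq> sset m S2" unfolding vset_def sset_def by auto
  show False
  proof (cases "p = 1")
    case True
    then have q3: "3 \<le> q" "q \<le> m" using e' unfolding isdiag_def by auto
    then show False using sblock[OF q3] h2 e' True by auto
  next
    case False
    then have p2: "2 \<le> p" using e' unfolding isdiag_def by auto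
    show False
    proof (cases "p = 2 \<and> q = Suc m")
      case True
      then show False using vblock[OF m] h1 e' by auto
    next
      case False
      show False using proj2[OF m S1 X1 e'(2) p2 False] proj2[OF m S2 X2 e'(2) p2 False] h1 h2 e'
          blk_contra[OF b] by auto
    qed
  qed
qed

lemma K3:
  assumes m: "m \<ge> 3" and e: "e \<in> Diag (Suc m)"
    and h1: "dm (Suc m) (sset m S) e" and h2: "dm (Suc m) (F1 m) e"
  shows False
proof -
  obtain p q where e': "e = {p,q}" "isdiag (Suc m) p q" using e m diag_form[of "Suc m"] by auto
  show False
  proof (cases "p = 1")
    case True
    then have q3: "3 \<le> q" "q \<le> m" using e' unfolding isdiag_def by auto
    then show False using sblock[OF q3] h1 e' True by auto
  next
    case False
    then have p2: "2 \<le> p" using e' unfolding isdiag_def by auto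
    then show False using Fblock[OF e'(2) p2] h2 e' by auto
  qed
qed


lemma tri_nonempty_set: "\<exists>T. T \<in> triangulations n"
  using complete[of "{}" n] unfolding nc_def by auto

lemma lower_step:
  assumes m: "m \<ge> 3"
    and IH: "\<And>c k. (\<forall>S\<in>triangulations m. c S < k) \<Longrightarrow>
         (\<forall>S1\<in>triangulations m. \<forall>S2\<in>triangulations m. blk m S1 S2 \<longrightarrow> c S1 \<noteq> c S2) \<Longrightarrow> m - 2 \<le> k"
    and cb: "\<forall>S\<in>triangulations (Suc m). c S < k"
    and cp: "\<forall>S1\<in>triangulations (Suc m). \<forall>S2\<in>triangulations (Suc m). blk (Suc m) S1 S2 \<longrightarrow> c S1 \<noteq> c S2"
  shows "Suc m - 2 \<le> k"
proof -
  define v where "v S = (SOME T. T \<in> triangulations (Suc m) \<and> vset m S \<subseteq> T)" for S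
  define s where "s S = (SOME T. T \<in> triangulations (Suc m) \<and> sset m S \<subseteq> T)" for S
  define w where "w = (SOME T. T \<in> triangulations (Suc m) \<and> F1 m \<subseteq> T)"
  have v: "v S \<in> triangulations (Suc m) \<and> vset m S \<subseteq> v S" if "S \<in> triangulations m" for S
    unfolding v_def by (rule someI_ex) (use complete vset_ok[OF m that] in blast)
  have s: "s S \<in> triangulations (Suc m) \<and> sset m S \<subseteq> s S" if "S \<in> triangulations m" for S
    unfolding s_def by (rule someI_ex) (use complete sset_ok[OF m that] in blast)
  have w: "w \<in> triangulations (Suc m) \<and> F1 m \<subseteq> w"
    unfolding w_def by (rule someI_ex) (use complete F1_ok[OF m] in blast)
  define k0 where "k0 = c w"
  have k0k: "k0 < k" using cb w unfolding k0_def by blast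
  have bvv: "blk (Suc m) (v S1) (v S2)" if "S1 \<in> triangulations m" "S2 \<in> triangulations m" "blk m S1 S2" for S1 S2
  proof (rule blk_intro)
    show "nc (v S1)" using v[OF that(1)] tri_nc by blast
    show "{1, apex m S1} \<in> v S1" using v[OF that(1)] unfolding vset_def by auto
    then show "{1, apex m S1} \<in> Diag (Suc m)" using v[OF that(1)] tri_sub by blast
    show "\<not> (\<exists>e\<in>Diag (Suc m). dm (Suc m) (v S1) e \<and> dm (Suc m) (v S2) e)"
      using K1[OF m that] dm_mono v[OF that(1)] v[OF that(2)] by blast
  qed
  have bvs: "blk (Suc m) (v S1) (s S2)" if "S1 \<in> triangulations m" "S2 \<in> triangulations m" "blk m S1 S2" for S1 S2
  proof (rule blk_intro)
    show "nc (v S1)" using v[OF that(1)] tri_nc by blast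
    show "{1, apex m S1} \<in> v S1" using v[OF that(1)] unfolding vset_def by auto
    then show "{1, apex m S1} \<in> Diag (Suc m)" using v[OF that(1)] tri_sub by blast
    show "\<not> (\<exists>e\<in>Diag (Suc m). dm (Suc m) (v S1) e \<and> dm (Suc m) (s S2) e)"
      using K2[OF m that] dm_mono v[OF that(1)] s[OF that(2)] by blast
  qed
  have bsw: "blk (Suc m) (s S) w" if "S \<in> triangulations m" for S
  proof (rule blk_intro)
    show "nc (s S)" using s[OF that] tri_nc by blast
    show "{2, Suc m} \<in> s S" using s[OF that] unfolding sset_def by auto
    then show "{2, Suc m} \<in> Diag (Suc m)" using s[OF that] tri_sub by blast
    show "\<not> (\<exists>e\<in>Diag (Suc m). dm (Suc m) (s S) e \<and> dm (Suc m) w e)"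
      using K3[OF m] dm_mono s[OF that] w by blast
  qed
  define y where "y S = (if c (v S) \<noteq> k0 then c (v S) else c (s S))" for S
  define g where "g x = (if x < k0 then x else x - 1)" for x :: nat
  have y1: "y S < k \<and> y S \<noteq> k0" if "S \<in> triangulations m" for S
  proof -
    have "c (s S) \<noteq> k0" using cp bsw[OF that] s[OF that] w unfolding k0_def by blast
    then show ?thesis unfolding y_def using cb v[OF that] s[OF that] by auto
  qed
  have y2: "y S1 \<noteq> y S2" if "S1 \<in> triangulations m" "S2 \<in> triangulations m" "blk m S1 S2" for S1 S2
  proof -
    have a: "c (v S1) \<noteq> c (v S2)" using cp bvv[OF that] v[OF that(1)] v[OF that(2)] by blast
    have b: "c (v S1) \<noteq> c (s S2)" using cp bvs[OF that] v[OF that(1)] s[OF that(2)] by blast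
    have b2: "blk m S2 S1" using that(3) blk_sym by blast
    have c: "c (v S2) \<noteq> c (s S1)" using cp bvs[OF that(2) that(1) b2] v[OF that(2)] s[OF that(1)] by blast
    show ?thesis unfolding y_def using a b c by auto
  qed
  have "m - 2 \<le> k - 1"
  proof (rule IH[of "\<lambda>S. g (y S)"])
    show "\<forall>S\<in>triangulations m. g (y S) < k - 1"
    proof
      fix S assume "S \<in> triangulations m"
      then show "g (y S) < k - 1" using y1 k0k unfolding g_def by fastforce
    qed
    show "\<forall>S1\<in>triangulations m. \<forall>S2\<in>triangulations m. blk m S1 S2 \<longrightarrow> g (y S1) \<noteq> g (y S2)"
    proof (intro ballI impI)
      fix S1 S2 assume h: "S1 \<in> triangulations m" "S2 \<in> triangulations m" "blk m S1 S2"
      have "y S1 \<noteq> y S2" "y S1 \<noteq> k0" "y S2 \<noteq> k0" using y1 y2 h by auto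
      then show "g (y S1) \<noteq> g (y S2)" unfolding g_def by auto
    qed
  qed
  then show ?thesis using k0k by auto
qed

lemma lower:
  assumes "m \<ge> 3"
  shows "\<forall>c k. (\<forall>S\<in>triangulations m. c S < k) \<longrightarrow>
         (\<forall>S1\<in>triangulations m. \<forall>S2\<in>triangulations m. blk m S1 S2 \<longrightarrow> c S1 \<noteq> c S2) \<longrightarrow> m - 2 \<le> k"
  using assms
proof (induction m rule: nat_induct_at_least)
  case base
  show ?case
  proof (intro allI impI)
    fix c :: "nat set set \<Rightarrow> nat" and k
    assume "\<forall>S\<in>triangulations 3. c S < k"
    then show "3 - 2 \<le> k" using tri_nonempty_set[of 3] by fastforce
  qed
next
  case (Suc m)
  show ?case
  proof (intro allI impI)
    fix c :: "nat set set \<Rightarrow> nat" and k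
    assume "\<forall>S\<in>triangulations (Suc m). c S < k"
      "\<forall>S1\<in>triangulations (Suc m). \<forall>S2\<in>triangulations (Suc m). blk (Suc m) S1 S2 \<longrightarrow> c S1 \<noteq> c S2"
    then show "Suc m - 2 \<le> k" using lower_step[OF Suc(1)] Suc(2) by blast
  qed
qed


lemma two_n:
  assumes n: "n \<ge> 4" and T: "T \<in> triangulations n" and no: "\<And>x. 3 \<le> x \<Longrightarrow> x < n \<Longrightarrow> {1,x} \<notin> T"
  shows "{2,n} \<in> T"
proof (rule tri_max[OF T])
  have n3: "n \<ge> 3" using n by simp
  have "isdiag n 2 n" using n unfolding isdiag_def by auto
  then show "{2,n} \<in> Diag n" using n3 diag_mem by auto
  fix d' assume "d' \<in> T"
  then obtain i j where d: "d' = {i,j}" "isdiag n i j" using n3 tri_sub[OF T] diag_form by blast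
  have ij: "i < j" "1 \<le> i" "j \<le> n" "i + 2 \<le> j" using d(2) unfolding isdiag_def by auto
  have s: "2 < n" using n by simp
  show "\<not> crosses {2,n} d'"
  proof
    assume "crosses {2,n} d'"
    then have "i = 1" "2 < j" "j < n" unfolding d(1) crosses_iff[OF s ij(1)] using ij by auto
    then show False using no[of j] \<open>d' \<in> T\<close> d(1) ij by auto
  qed
qed

lemma tri_ne: assumes "n \<ge> 4" "T \<in> triangulations n" shows "T \<noteq> {}"
proof
  assume e: "T = {}"
  have "isdiag n 1 3" using assms(1) unfolding isdiag_def by auto
  then have "{1,3} \<in> Diag n" using assms(1) diag_mem[of n] by auto
  then have "{1,3} \<in> T" using tri_max[OF assms(2)] e by blast
  then show False using e by simp
qed

theorem lemma3p3:
  fixes n :: nat and Tp :: "nat set set set"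
  assumes "n \<ge> 3"
    and "Tp \<subseteq> triangulations n"
    and "\<forall>T\<in>triangulations n. \<exists>T'\<in>Tp. swap_triang n T T'"
  shows "chromatic_number_KG Tp = n - 2"
proof -
  have n3: "n \<ge> 3" using assms(1) .
  define A where "A T = (LEAST a. 3 \<le> a \<and> ({1,a} \<in> T \<or> a = n))" for T :: "nat set set"
  have A1: "3 \<le> A T \<and> ({1, A T} \<in> T \<or> A T = n)" for T
    unfolding A_def by (rule LeastI[of _ n]) (use n3 in simp)
  have A2: "A T \<le> n" for T
    unfolding A_def by (rule Least_le) (use n3 in simp)
  have A3: "\<not> (3 \<le> x \<and> ({1,x} \<in> T \<or> x = n))" if "x < A T" for x T
    using that unfolding A_def by (rule not_less_Least)
  define col where "col T = A T - 3" for T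
  have P: "proper_coloring Tp col (n - 2)"
    unfolding proper_coloring_def
  proof (intro conjI ballI allI impI)
    fix F assume "F \<in> Tp"
    show "col F < n - 2" unfolding col_def using A1[of F] A2[of F] n3 by auto
  next
    fix F F' assume adj: "KG_adj Tp F F'"
    then have F: "F \<in> triangulations n" "F' \<in> triangulations n" "F \<noteq> F'" "F \<inter> F' = {}"
      using assms(2) unfolding KG_adj_def by auto
    show "col F \<noteq> col F'"
    proof
      assume "col F = col F'"
      then have eq: "A F = A F'" unfolding col_def using A1[of F] A1[of F'] by auto
      show False
      proof (cases "A F < n")
        case True
        then have "{1, A F} \<in> F" "{1, A F} \<in> F'" using A1[of F] A1[of F'] eq by auto
        then show False using F(4) by blast
      next
        case False
        then have An: "A F = n" "A F' = n" using A2[of F] eq by auto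
        show False
        proof (cases "n = 3")
          case True
          then show False using F tri3 by blast
        next
          case False
          then have n4: "n \<ge> 4" using n3 by simp
          have "{2,n} \<in> F" using two_n[OF n4 F(1)] A3[of _ F] An(1) by auto
          moreover have "{2,n} \<in> F'" using two_n[OF n4 F(2)] A3[of _ F'] An(2) by auto
          ultimately show False using F(4) by blast
        qed
      qed
    qed
  qed
  have L: "n - 2 \<le> k" if pc: "proper_coloring Tp c k" for c k
  proof -
    define f where "f S = (SOME T'. T' \<in> Tp \<and> swap_triang n S T')" for S
    have f: "f S \<in> Tp \<and> swap_triang n S (f S)" if "S \<in> triangulations n" for S
      unfolding f_def by (rule someI_ex) (use assms(3) that in blast)
    have cb: "\<forall>F\<in>Tp. c F < k" and cp: "\<And>F F'. KG_adj Tp F F' \<Longrightarrow> c F \<noteq> c F'"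
      using pc unfolding proper_coloring_def by auto
    have "\<forall>c k. (\<forall>S\<in>triangulations n. c S < k) \<longrightarrow>
         (\<forall>S1\<in>triangulations n. \<forall>S2\<in>triangulations n. blk n S1 S2 \<longrightarrow> c S1 \<noteq> c S2) \<longrightarrow> n - 2 \<le> k"
      using lower[OF n3] .
    then have imp: "(\<forall>S\<in>triangulations n. c (f S) < k) \<longrightarrow>
         (\<forall>S1\<in>triangulations n. \<forall>S2\<in>triangulations n. blk n S1 S2 \<longrightarrow> c (f S1) \<noteq> c (f S2)) \<longrightarrow> n - 2 \<le> k"
      by (rule allE[where x="\<lambda>S. c (f S)"], elim allE[where x=k])
    show ?thesis
    proof (rule imp[rule_format])
      fix S assume "S \<in> triangulations n"
      then show "c (f S) < k" using f cb by blast
    next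
      fix S1 S2 assume h: "S1 \<in> triangulations n" "S2 \<in> triangulations n" "blk n S1 S2"
      have disj: "f S1 \<inter> f S2 = {}"
      proof (rule ccontr)
        assume "f S1 \<inter> f S2 \<noteq> {}"
        then obtain e where e: "e \<in> f S1" "e \<in> f S2" by blast
        have "e \<in> Diag n" using e f[OF h(1)] assms(2) tri_sub by blast
        moreover have "dm n S1 e" "dm n S2 e" using e f[OF h(1)] f[OF h(2)]
          unfolding dm_def swap_triang_def by auto
        ultimately show False using h(3) unfolding blk_def by blast
      qed
      have neq: "f S1 \<noteq> f S2"
      proof (cases "n = 3")
        case True
        then show ?thesis using h tri3 unfolding blk_def by blast
      next
        case False
        then have n4: "n \<ge> 4" using n3 by simp
        have "f S1 \<noteq> {}" using tri_ne[OF n4] f[OF h(1)] assms(2) by blast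
        then show ?thesis using disj by auto
      qed
      have "KG_adj Tp (f S1) (f S2)" unfolding KG_adj_def using f h disj neq by blast
      then show "c (f S1) \<noteq> c (f S2)" using cp by blast
    qed
  qed
  show ?thesis unfolding chromatic_number_KG_def
  proof (rule Least_equality)
    show "\<exists>c. proper_coloring Tp c (n - 2)" using P by blast
    show "\<And>k. \<exists>c. proper_coloring Tp c k \<Longrightarrow> n - 2 \<le> k" using L by blast
  qed
qed

end
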